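(* Let $R$ be a ring, $M$ an $R$-module of finite length, and $A_1,A_2,B_1,B_2\subset M$ submodules such that $A_1$ and $A_2$ are coprime, $A_1\oplus A_2=M$, $B_1\oplus B_2=M$, and $A_1\cong B_1$. Then $A_1\oplus B_2=M$ and $B_1\oplus A_2=M$.
   Context: Modules are left modules. A module has finite length if every totally ordered set of submodules is finite. For submodules $C,D$ of $M$, $C\oplus D=M$ means the natural map $C\oplus D\to M$ is an isomorphism. An $R$-module $D$ is a divisor of $M$ if $M\cong D\oplus N$ for some $R$-module $N$. Two $R$-modules of finite length are coprime if $0$ is (up to isomorphism) the only $R$-module that is a divisor of both. *)

theory Defs
  imports "HOL-Algebra.Module"
begin

text \<open>The library locale module requires a commutative ring, so we state the
  left module axioms directly (same axioms as the library, with ring instead of cring).\<close>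

definition lmodule :: "('r, 'z) ring_scheme \<Rightarrow> ('r, 'a) module \<Rightarrow> bool" where
  "lmodule R M \<longleftrightarrow> ring R \<and> abelian_group M \<and>
     (\<forall>a \<in> carrier R. \<forall>x \<in> carrier M. a \<odot>\<^bsub>M\<^esub> x \<in> carrier M) \<and>
     (\<forall>a \<in> carrier R. \<forall>b \<in> carrier R. \<forall>x \<in> carrier M.
        (a \<oplus>\<^bsub>R\<^esub> b) \<odot>\<^bsub>M\<^esub> x = a \<odot>\<^bsub>M\<^esub> x \<oplus>\<^bsub>M\<^esub> b \<odot>\<^bsub>M\<^esub> x) \<and>
     (\<forall>a \<in> carrier R. \<forall>x \<in> carrier M. \<forall>y \<in> carrier M.
        a \<odot>\<^bsub>M\<^esub> (x \<oplus>\<^bsub>M\<^esub> y) = a \<odot>\<^bsub>M\<^esub> x \<oplus>\<^bsub>M\<^esub> a \<odot>\<^bsub>M\<^esub> y) \<and>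
     (\<forall>a \<in> carrier R. \<forall>b \<in> carrier R. \<forall>x \<in> carrier M.
        (a \<otimes>\<^bsub>R\<^esub> b) \<odot>\<^bsub>M\<^esub> x = a \<odot>\<^bsub>M\<^esub> (b \<odot>\<^bsub>M\<^esub> x)) \<and>
     (\<forall>x \<in> carrier M. \<one>\<^bsub>R\<^esub> \<odot>\<^bsub>M\<^esub> x = x)"

definition submod :: "('r, 'a) module \<Rightarrow> 'a set \<Rightarrow> ('r, 'a) module" where
  "submod M A = M\<lparr>carrier := A\<rparr>"

definition finite_length :: "('r, 'z) ring_scheme \<Rightarrow> ('r, 'a) module \<Rightarrow> bool" where
  "finite_length R M \<longleftrightarrow>
     (\<forall>C. C \<subseteq> {N. submodule N R M} \<and> (\<forall>X \<in> C. \<forall>Y \<in> C. X \<subseteq> Y \<or> Y \<subseteq> X) \<longrightarrow> finite C)"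

text \<open>Internal direct sum C \<oplus> D = M: C, D submodules and the natural map
  C \<times> D \<rightarrow> M, (c,d) \<mapsto> c + d, is bijective (it is always R-linear, so this
  is the same as being an isomorphism).\<close>
definition internal_dsum :: "('r, 'z) ring_scheme \<Rightarrow> ('r, 'a) module \<Rightarrow> 'a set \<Rightarrow> 'a set \<Rightarrow> bool" where
  "internal_dsum R M C D \<longleftrightarrow> submodule C R M \<and> submodule D R M \<and>
     bij_betw (\<lambda>(c, d). c \<oplus>\<^bsub>M\<^esub> d) (C \<times> D) (carrier M)"

definition mod_iso :: "('r, 'z) ring_scheme \<Rightarrow> ('r, 'a) module \<Rightarrow> ('r, 'b) module \<Rightarrow> ('a \<Rightarrow> 'b) \<Rightarrow> bool" where
  "mod_iso R M N f \<longleftrightarrow>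
     (\<forall>x \<in> carrier M. \<forall>y \<in> carrier M. f (x \<oplus>\<^bsub>M\<^esub> y) = f x \<oplus>\<^bsub>N\<^esub> f y) \<and>
     (\<forall>a \<in> carrier R. \<forall>x \<in> carrier M. f (a \<odot>\<^bsub>M\<^esub> x) = a \<odot>\<^bsub>N\<^esub> f x) \<and>
     bij_betw f (carrier M) (carrier N)"

definition mod_isomorphic :: "('r, 'z) ring_scheme \<Rightarrow> ('r, 'a) module \<Rightarrow> ('r, 'b) module \<Rightarrow> bool" where
  "mod_isomorphic R M N \<longleftrightarrow> (\<exists>f. mod_iso R M N f)"

text \<open>External direct sum of two modules (the ring fields mult/one are irrelevant).\<close>
definition ext_dsum :: "('r, 'a) module \<Rightarrow> ('r, 'b) module \<Rightarrow> ('r, 'a \<times> 'b) module" where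
  "ext_dsum D N =
     \<lparr>carrier = carrier D \<times> carrier N,
      mult = (\<lambda>_ _. undefined), one = undefined,
      zero = (\<zero>\<^bsub>D\<^esub>, \<zero>\<^bsub>N\<^esub>),
      add = (\<lambda>(x, y) (x', y'). (x \<oplus>\<^bsub>D\<^esub> x', y \<oplus>\<^bsub>N\<^esub> y')),
      smult = (\<lambda>r (x, y). (r \<odot>\<^bsub>D\<^esub> x, r \<odot>\<^bsub>N\<^esub> y))\<rparr>"

text \<open>The complement N
  ranges over modules with the same element type as D (any complement is
  isomorphic to a submodule of M, so no generality is lost in our uses).\<close>
definition divisor :: "('r, 'z) ring_scheme \<Rightarrow> ('r, 'a) module \<Rightarrow> ('r, 'a) module \<Rightarrow> bool" where
  "divisor R D M \<longleftrightarrow> (\<exists>N :: ('r, 'a) module. lmodule R N \<and> mod_isomorphic R M (ext_dsum D N))"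

text \<open>Coprime: up to isomorphism, 0 is the only common divisor.  Candidate
  divisors range over R-modules with the element type of the given modules.\<close>
definition coprime_mod :: "('r, 'z) ring_scheme \<Rightarrow> ('r, 'a) module \<Rightarrow> ('r, 'a) module \<Rightarrow> bool" where
  "coprime_mod R X Y \<longleftrightarrow>
     (\<forall>D :: ('r, 'a) module. lmodule R D \<and> divisor R D X \<and> divisor R D Y
        \<longrightarrow> carrier D = {\<zero>\<^bsub>D\<^esub>})"

end

theory Submission
  imports Defs
begin

definition mhom :: "('r,'z) ring_scheme \<Rightarrow> ('r,'a) module \<Rightarrow> 'a set \<Rightarrow> 'a set \<Rightarrow> ('a \<Rightarrow> 'a) \<Rightarrow> bool" where
  "mhom R M X Y h \<longleftrightarrow> (\<forall>x\<in>X. h x \<in> Y) \<and> (\<forall>x\<in>X. \<forall>y\<in>X. h (x \<oplus>\<^bsub>M\<^esub> y) = h x \<oplus>\<^bsub>M\<^esub> h y)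
     \<and> (\<forall>a\<in>carrier R. \<forall>x\<in>X. h (a \<odot>\<^bsub>M\<^esub> x) = a \<odot>\<^bsub>M\<^esub> h x)"

lemma stab_dec_aux:
  fixes S :: "nat \<Rightarrow> 'a set"
  assumes fin: "finite (range S)" and dec: "\<And>k. S (Suc k) \<subseteq> S k"
  shows "\<exists>k. \<forall>j\<ge>k. S j = S k"
proof -
  obtain y where y: "infinite (S -` {y})"
    using inf_img_fin_dom[OF fin infinite_UNIV_nat] by auto
  then obtain k where k: "k \<in> S -` {y}" by (metis finite.emptyI ex_in_conv)
  have "S j = S k" if "j \<ge> k" for j
  proof -
    have "\<not> (S -` {y} \<subseteq> {..<j})" using y finite_lessThan finite_subset by blast
    then obtain m where m0: "m \<in> S -` {y}" "\<not> m < j" by blast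
    then have m: "m \<in> S -` {y}" "m \<ge> j" by auto
    have "S m \<subseteq> S j" "S j \<subseteq> S k" using lift_Suc_antimono_le[of S, OF dec] m that by auto
    then show ?thesis using m k by auto
  qed
  then show ?thesis by blast
qed

lemma stab_inc_aux:
  fixes S :: "nat \<Rightarrow> 'a set"
  assumes fin: "finite (range S)" and inc: "\<And>k. S k \<subseteq> S (Suc k)"
  shows "\<exists>k. \<forall>j\<ge>k. S j = S k"
proof -
  obtain y where y: "infinite (S -` {y})"
    using inf_img_fin_dom[OF fin infinite_UNIV_nat] by auto
  then obtain k where k: "k \<in> S -` {y}" by (metis finite.emptyI ex_in_conv)
  have "S j = S k" if "j \<ge> k" for j
  proof -
    have "\<not> (S -` {y} \<subseteq> {..<j})" using y finite_lessThan finite_subset by blast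
    then obtain m where m0: "m \<in> S -` {y}" "\<not> m < j" by blast
    then have m: "m \<in> S -` {y}" "m \<ge> j" by auto
    have "S j \<subseteq> S m" "S k \<subseteq> S j" using lift_Suc_mono_le[of S, OF inc] m that by auto
    then show ?thesis using m k by auto
  qed
  then show ?thesis by blast
qed

locale lmod =
  fixes R :: "('r, 'z) ring_scheme" and M :: "('r, 'a) module" (structure)
  assumes lm: "lmodule R M"
begin

lemma ag: "abelian_group M" using lm unfolding lmodule_def by auto
sublocale abelian_group M by (rule ag)

lemma smult_closed: "a \<in> carrier R \<Longrightarrow> x \<in> carrier M \<Longrightarrow> a \<odot> x \<in> carrier M"
  using lm unfolding lmodule_def by auto
lemma smult_add: "a \<in> carrier R \<Longrightarrow> x \<in> carrier M \<Longrightarrow> y \<in> carrier M \<Longrightarrow> a \<odot> (x \<oplus> y) = a \<odot> x \<oplus> a \<odot> y"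
  using lm unfolding lmodule_def by auto
lemma smult_zero: "a \<in> carrier R \<Longrightarrow> a \<odot> \<zero> = \<zero>"
proof -
  assume a: "a \<in> carrier R"
  have "a \<odot> \<zero> \<oplus> a \<odot> \<zero> = a \<odot> \<zero> \<oplus> \<zero>"
    using smult_add[OF a, of \<zero> \<zero>] smult_closed[OF a] by simp
  then show ?thesis using smult_closed[OF a] by simp
qed
lemma smult_neg: "a \<in> carrier R \<Longrightarrow> x \<in> carrier M \<Longrightarrow> a \<odot> (\<ominus> x) = \<ominus> (a \<odot> x)"
proof -
  assume a: "a \<in> carrier R" and x: "x \<in> carrier M"
  have "a \<odot> x \<oplus> a \<odot> (\<ominus> x) = \<zero>"
    using smult_add[OF a x, of "\<ominus> x"] x smult_zero[OF a] by (simp add: r_neg)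
  then show ?thesis using smult_closed[OF a] x
    by (metis a_inv_closed minus_equality a_comm)
qed
lemma smult_minus: "a \<in> carrier R \<Longrightarrow> x \<in> carrier M \<Longrightarrow> y \<in> carrier M \<Longrightarrow> a \<odot> (x \<ominus> y) = a \<odot> x \<ominus> a \<odot> y"
  by (simp add: minus_eq smult_add smult_neg)

lemma sub_carrier: "submodule X R M \<Longrightarrow> X \<subseteq> carrier M"
  unfolding submodule_def subgroup_def by auto
lemma sub_zero: "submodule X R M \<Longrightarrow> \<zero> \<in> X"
  unfolding submodule_def subgroup_def by auto
lemma sub_add: "submodule X R M \<Longrightarrow> x \<in> X \<Longrightarrow> y \<in> X \<Longrightarrow> x \<oplus> y \<in> X"
  unfolding submodule_def subgroup_def by auto
lemma sub_neg: "submodule X R M \<Longrightarrow> x \<in> X \<Longrightarrow> \<ominus> x \<in> X"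
  unfolding submodule_def subgroup_def a_inv_def by auto
lemma sub_minus: "submodule X R M \<Longrightarrow> x \<in> X \<Longrightarrow> y \<in> X \<Longrightarrow> x \<ominus> y \<in> X"
  using sub_add sub_neg sub_carrier by (metis minus_eq subsetD)
lemma sub_smult: "submodule X R M \<Longrightarrow> a \<in> carrier R \<Longrightarrow> x \<in> X \<Longrightarrow> a \<odot> x \<in> X"
  unfolding submodule_def submodule_axioms_def by auto

lemma submoduleI:
  assumes "X \<subseteq> carrier M" "\<zero> \<in> X" "\<And>x y. x \<in> X \<Longrightarrow> y \<in> X \<Longrightarrow> x \<oplus> y \<in> X"
    "\<And>x. x \<in> X \<Longrightarrow> \<ominus> x \<in> X" "\<And>a x. a \<in> carrier R \<Longrightarrow> x \<in> X \<Longrightarrow> a \<odot> x \<in> X"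
  shows "submodule X R M"
  unfolding submodule_def submodule_axioms_def subgroup_def using assms
  by (auto simp: a_inv_def)

lemma sub_lmodule: assumes "submodule X R M" shows "lmodule R (submod M X)"
proof -
  note c = sub_carrier[OF assms, THEN subsetD]
  have "abelian_group (M\<lparr>carrier := X\<rparr>)"
  proof (rule abelian_groupI)
    fix x assume x: "x \<in> carrier (M\<lparr>carrier := X\<rparr>)"
    then show "\<exists>y\<in>carrier (M\<lparr>carrier := X\<rparr>). y \<oplus>\<^bsub>M\<lparr>carrier := X\<rparr>\<^esub> x = \<zero>\<^bsub>M\<lparr>carrier := X\<rparr>\<^esub>"
      using sub_neg[OF assms] c by (auto intro!: bexI[of _ "\<ominus> x"] simp: l_neg)
  qed (use assms c sub_zero sub_add in \<open>auto simp: a_ac\<close>)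
  then show ?thesis using lm assms sub_smult unfolding lmodule_def submod_def
    by (auto simp: sub_carrier[OF assms, THEN subsetD])
qed

lemma mhom_in: "mhom R M X Y h \<Longrightarrow> x \<in> X \<Longrightarrow> h x \<in> Y" unfolding mhom_def by auto
lemma mhom_add: "mhom R M X Y h \<Longrightarrow> x \<in> X \<Longrightarrow> y \<in> X \<Longrightarrow> h (x \<oplus> y) = h x \<oplus> h y" unfolding mhom_def by auto
lemma mhom_smult: "mhom R M X Y h \<Longrightarrow> a \<in> carrier R \<Longrightarrow> x \<in> X \<Longrightarrow> h (a \<odot> x) = a \<odot> h x" unfolding mhom_def by auto

lemma mhom_zero: assumes "mhom R M X Y h" "submodule X R M" "submodule Y R M" shows "h \<zero> = \<zero>"
proof -
  have "h \<zero> \<oplus> h \<zero> = h \<zero>" using mhom_add[OF assms(1), of \<zero> \<zero>] sub_zero[OF assms(2)] by simp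
  moreover have "h \<zero> \<in> carrier M" using mhom_in[OF assms(1) sub_zero[OF assms(2)]] sub_carrier[OF assms(3)] by auto
  ultimately show ?thesis by simp
qed

lemma mhom_neg: assumes "mhom R M X Y h" "submodule X R M" "submodule Y R M" "x \<in> X"
  shows "h (\<ominus> x) = \<ominus> h x"
proof -
  have "h x \<oplus> h (\<ominus> x) = \<zero>" using mhom_add[OF assms(1), of x "\<ominus> x"] sub_neg[OF assms(2)] assms
      mhom_zero[OF assms(1-3)] sub_carrier[OF assms(2)] by (auto simp: r_neg)
  moreover have "h x \<in> carrier M" "h (\<ominus> x) \<in> carrier M"
    using mhom_in[OF assms(1)] sub_neg[OF assms(2)] assms(4) sub_carrier[OF assms(3)] by auto
  ultimately show ?thesis by (metis minus_equality a_comm)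
qed

lemma mhom_minus: assumes "mhom R M X Y h" "submodule X R M" "submodule Y R M" "x \<in> X" "y \<in> X"
  shows "h (x \<ominus> y) = h x \<ominus> h y"
  using assms mhom_neg[OF assms(1-3)] mhom_add[OF assms(1)] sub_neg[OF assms(2)] by (simp add: minus_eq)

lemma mhom_comp: "mhom R M X Y h \<Longrightarrow> mhom R M Y Z g \<Longrightarrow> mhom R M X Z (\<lambda>x. g (h x))"
  unfolding mhom_def by auto

lemma mhom_id: "mhom R M X X (\<lambda>x. x)" unfolding mhom_def by auto

lemma mhom_mono: "mhom R M X Y h \<Longrightarrow> X' \<subseteq> X \<Longrightarrow> Y \<subseteq> Y' \<Longrightarrow> mhom R M X' Y' h"
  unfolding mhom_def by (auto simp: subset_iff)

lemma mhom_funpow: "mhom R M X X h \<Longrightarrow> mhom R M X X (h ^^ k)"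
proof (induction k)
  case 0 then show ?case using mhom_id by (simp add: id_def)
next
  case (Suc k) then show ?case using mhom_comp[of X X "h^^k" X h] by (simp add: comp_def)
qed

lemma mhom_inv: assumes "mhom R M X Y h" "bij_betw h X Y" "submodule X R M" "submodule Y R M"
  shows "mhom R M Y X (the_inv_into X h)"
proof -
  have inj: "inj_on h X" and im: "h ` X = Y" using assms(2) by (auto simp: bij_betw_def)
  have a: "the_inv_into X h y \<in> X" if "y \<in> Y" for y using that im inj by (auto intro: the_inv_into_into)
  have b: "h (the_inv_into X h y) = y" if "y \<in> Y" for y using that im inj f_the_inv_into_f by fastforce
  have c: "the_inv_into X h (h x) = x" if "x \<in> X" for x using that inj the_inv_into_f_f by fastforce
  show ?thesis unfolding mhom_def
  proof (intro conjI ballI)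
    fix x y assume xy: "x \<in> Y" "y \<in> Y"
    have "x \<oplus> y = h (the_inv_into X h x \<oplus> the_inv_into X h y)"
      using mhom_add[OF assms(1) a a] xy b by simp
    then show "the_inv_into X h (x \<oplus> y) = the_inv_into X h x \<oplus> the_inv_into X h y"
      using c sub_add[OF assms(3) a a] xy by simp
  next
    fix r x assume xy: "r \<in> carrier R" "x \<in> Y"
    have "r \<odot> x = h (r \<odot> the_inv_into X h x)"
      using mhom_smult[OF assms(1) xy(1) a] xy b by simp
    then show "the_inv_into X h (r \<odot> x) = r \<odot> the_inv_into X h x"
      using c sub_smult[OF assms(3) xy(1) a] xy by simp
  qed (use a in auto)
qed

lemma image_sub: assumes "mhom R M X Y h" "submodule X R M" "submodule Y R M"
  shows "submodule (h ` X) R M"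
proof (rule submoduleI)
  show "h ` X \<subseteq> carrier M" using mhom_in[OF assms(1)] sub_carrier[OF assms(3)] by auto
  show "\<zero> \<in> h ` X" using mhom_zero[OF assms] sub_zero[OF assms(2)] by (metis image_eqI)
  show "x \<oplus> y \<in> h ` X" if xy: "x \<in> h ` X" "y \<in> h ` X" for x y
  proof -
    obtain u v where "u \<in> X" "v \<in> X" "x = h u" "y = h v" using xy by (meson imageE)
    then show ?thesis using mhom_add[OF assms(1)] sub_add[OF assms(2)] by (metis image_eqI)
  qed
  show "\<ominus> x \<in> h ` X" if xy: "x \<in> h ` X" for x
  proof -
    obtain u where "u \<in> X" "x = h u" using xy by auto
    then show ?thesis using mhom_neg[OF assms] sub_neg[OF assms(2)] by (metis image_eqI)
  qed
  show "a \<odot> x \<in> h ` X" if xy: "a \<in> carrier R" "x \<in> h ` X" for a x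
  proof -
    obtain u where "u \<in> X" "x = h u" using xy by auto
    then show ?thesis using xy mhom_smult[OF assms(1)] sub_smult[OF assms(2)] by (metis image_eqI)
  qed
qed

lemma ker_sub: assumes "mhom R M X Y h" "submodule X R M" "submodule Y R M"
  shows "submodule {x \<in> X. h x = \<zero>} R M"
proof (rule submoduleI)
  show "{x \<in> X. h x = \<zero>} \<subseteq> carrier M" using sub_carrier[OF assms(2)] by auto
qed (use assms mhom_zero[OF assms] sub_zero[OF assms(2)] mhom_add[OF assms(1)] sub_add[OF assms(2)]
      mhom_neg[OF assms] sub_neg[OF assms(2)] mhom_smult[OF assms(1)] sub_smult[OF assms(2)] smult_zero
     in auto)

lemma ga1: "a \<in> carrier M \<Longrightarrow> b \<in> carrier M \<Longrightarrow> a \<oplus> (b \<ominus> a) = b"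
proof -
  assume "a \<in> carrier M" "b \<in> carrier M"
  then have "a \<oplus> (b \<ominus> a) = b \<oplus> (a \<oplus> \<ominus> a)" by (simp add: minus_eq a_lcomm)
  then show ?thesis using \<open>a \<in> carrier M\<close> \<open>b \<in> carrier M\<close> by (simp add: r_neg)
qed
lemma ga3: "a \<in> carrier M \<Longrightarrow> a \<ominus> a = \<zero>"
  by (simp add: minus_eq r_neg)
lemma ga4: "a \<in> carrier M \<Longrightarrow> b \<in> carrier M \<Longrightarrow> a \<oplus> b \<ominus> a = b"
proof -
  assume "a \<in> carrier M" "b \<in> carrier M"
  then have "a \<oplus> b \<ominus> a = b \<oplus> (a \<oplus> \<ominus> a)" by (simp add: minus_eq a_ac)
  then show ?thesis using \<open>a \<in> carrier M\<close> \<open>b \<in> carrier M\<close> by (simp add: r_neg)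
qed
lemma ga2: "x \<in> carrier M \<Longrightarrow> y \<in> carrier M \<Longrightarrow> a \<in> carrier M \<Longrightarrow> b \<in> carrier M \<Longrightarrow>
   (x \<oplus> y) \<ominus> (a \<oplus> b) = (x \<ominus> a) \<oplus> (y \<ominus> b)"
  by (simp add: minus_eq minus_add a_ac)
lemma ga5: "a \<in> carrier M \<Longrightarrow> b \<in> carrier M \<Longrightarrow> a \<ominus> b = \<zero> \<Longrightarrow> a = b"
proof -
  assume h: "a \<in> carrier M" "b \<in> carrier M" "a \<ominus> b = \<zero>"
  have "b \<oplus> (a \<ominus> b) = a" using ga1[OF h(2) h(1)] by simp
  then show ?thesis using h by simp
qed

lemma split_divisor:
  assumes X: "submodule X R M" and Y: "submodule Y R M"
    and s: "mhom R M X Y s" and t: "mhom R M Y X t" and ts: "\<And>x. x \<in> X \<Longrightarrow> t (s x) = x"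
  shows "divisor R (submod M X) (submod M Y)"
proof -
  define Z where "Z = {y \<in> Y. t y = \<zero>}"
  have Z: "submodule Z R M" unfolding Z_def by (rule ker_sub[OF t Y X])
  have cX: "x \<in> carrier M" if "x \<in> X" for x using that sub_carrier[OF X] by auto
  have cY: "x \<in> carrier M" if "x \<in> Y" for x using that sub_carrier[OF Y] by auto
  define F where "F y = (t y, y \<ominus> s (t y))" for y
  define G where "G p = s (fst p) \<oplus> snd p" for p
  have FZ: "F y \<in> X \<times> Z" if y: "y \<in> Y" for y
  proof -
    have 1: "t y \<in> X" using mhom_in[OF t y] .
    have 2: "s (t y) \<in> Y" using mhom_in[OF s 1] .
    have "t (y \<ominus> s (t y)) = t y \<ominus> t (s (t y))" using mhom_minus[OF t Y X y 2] .
    also have "\<dots> = \<zero>" using ts[OF 1] ga3 cX[OF 1] by simp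
    finally show ?thesis using 1 sub_minus[OF Y y 2] unfolding F_def Z_def by auto
  qed
  have GF: "G (F y) = y" if y: "y \<in> Y" for y
    unfolding F_def G_def using ga1 cY y mhom_in[OF s mhom_in[OF t y]] by simp
  have GY: "G p \<in> Y" if p: "p \<in> X \<times> Z" for p
    unfolding G_def using p mhom_in[OF s] sub_add[OF Y] by (auto simp: Z_def)
  have FG: "F (G p) = p" if p: "p \<in> X \<times> Z" for p
  proof -
    obtain x z where p': "p = (x, z)" "x \<in> X" "z \<in> Y" "t z = \<zero>" using p by (auto simp: Z_def)
    have sx: "s x \<in> Y" using mhom_in[OF s p'(2)] .
    have "t (G p) = x" unfolding G_def using p' mhom_add[OF t sx p'(3)] ts cX by simp
    then show ?thesis unfolding F_def G_def using p' ga4 cY sx by simp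
  qed
  have bij: "bij_betw F Y (X \<times> Z)"
  proof (rule bij_betw_byWitness[where f'=G])
    show "F ` Y \<subseteq> X \<times> Z" using FZ by (intro image_subsetI)
    show "G ` (X \<times> Z) \<subseteq> Y" using GY by (intro image_subsetI)
  qed (use GF FG in auto)
  have add: "F (x \<oplus> y) = (fst (F x) \<oplus> fst (F y), snd (F x) \<oplus> snd (F y))" if xy: "x \<in> Y" "y \<in> Y" for x y
  proof -
    have tx: "t x \<in> X" "t y \<in> X" using mhom_in[OF t] xy by auto
    have "s (t (x \<oplus> y)) = s (t x) \<oplus> s (t y)" using mhom_add[OF t xy] mhom_add[OF s tx] by simp
    then show ?thesis unfolding F_def using mhom_add[OF t xy] ga2 cY xy mhom_in[OF s tx(1)] mhom_in[OF s tx(2)] by simp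
  qed
  have sm: "F (a \<odot> y) = (a \<odot> fst (F y), a \<odot> snd (F y))" if a: "a \<in> carrier R" and y: "y \<in> Y" for a y
  proof -
    have ty: "t y \<in> X" using mhom_in[OF t y] .
    have "s (t (a \<odot> y)) = a \<odot> s (t y)" using mhom_smult[OF t a y] mhom_smult[OF s a ty] by simp
    then show ?thesis unfolding F_def using mhom_smult[OF t a y] smult_minus[OF a] cY y mhom_in[OF s ty] by simp
  qed
  have "mod_iso R (submod M Y) (ext_dsum (submod M X) (submod M Z)) F"
    unfolding mod_iso_def submod_def ext_dsum_def
    using bij add sm by (auto simp: case_prod_beta)
  then show ?thesis unfolding divisor_def mod_isomorphic_def using sub_lmodule[OF Z] by blast
qed

end

context lmod begin

lemma carrier_sub: "submodule (carrier M) R M"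
  by (rule submoduleI) (auto simp: smult_closed)

lemma dsum_ex: assumes "internal_dsum R M C D" "m \<in> carrier M" shows "\<exists>c\<in>C. \<exists>d\<in>D. m = c \<oplus> d"
proof -
  have "m \<in> (\<lambda>(c, d). c \<oplus> d) ` (C \<times> D)" using assms unfolding internal_dsum_def bij_betw_def by auto
  then obtain p where "p \<in> C \<times> D" "m = (\<lambda>(c, d). c \<oplus> d) p" by (rule imageE)
  then show ?thesis by (cases p) auto
qed

lemma dsum_uniq: "internal_dsum R M C D \<Longrightarrow> c \<in> C \<Longrightarrow> c' \<in> C \<Longrightarrow> d \<in> D \<Longrightarrow> d' \<in> D \<Longrightarrow>
   c \<oplus> d = c' \<oplus> d' \<Longrightarrow> c = c' \<and> d = d'"
  unfolding internal_dsum_def bij_betw_def inj_on_def by auto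

lemma dsumI: assumes "submodule C R M" "submodule D R M"
  "\<And>m. m \<in> carrier M \<Longrightarrow> \<exists>c\<in>C. \<exists>d\<in>D. m = c \<oplus> d"
  "\<And>c c' d d'. c \<in> C \<Longrightarrow> c' \<in> C \<Longrightarrow> d \<in> D \<Longrightarrow> d' \<in> D \<Longrightarrow> c \<oplus> d = c' \<oplus> d' \<Longrightarrow> c = c' \<and> d = d'"
  shows "internal_dsum R M C D"
  unfolding internal_dsum_def bij_betw_def inj_on_def
proof (intro conjI assms(1,2) ballI impI)
  show "(\<lambda>(c, d). c \<oplus> d) ` (C \<times> D) = carrier M"
  proof
    show "(\<lambda>(c, d). c \<oplus> d) ` (C \<times> D) \<subseteq> carrier M" using sub_carrier[OF assms(1)] sub_carrier[OF assms(2)] by auto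
    show "carrier M \<subseteq> (\<lambda>(c, d). c \<oplus> d) ` (C \<times> D)" using assms(3) by fastforce
  qed
qed (use assms(4) in auto)

definition pr1 :: "'a set \<Rightarrow> 'a set \<Rightarrow> 'a \<Rightarrow> 'a" where
  "pr1 C D m = (THE c. c \<in> C \<and> (\<exists>d\<in>D. m = c \<oplus> d))"

lemma pr1_eq: assumes "internal_dsum R M C D" "c \<in> C" "d \<in> D" shows "pr1 C D (c \<oplus> d) = c"
  unfolding pr1_def
proof (rule the_equality)
  show "c \<in> C \<and> (\<exists>d'\<in>D. c \<oplus> d = c \<oplus> d')" using assms by auto
  show "c' = c" if h: "c' \<in> C \<and> (\<exists>d'\<in>D. c \<oplus> d = c' \<oplus> d')" for c'
  proof -
    obtain d' where "d' \<in> D" "c \<oplus> d = c' \<oplus> d'" using h by blast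
    then show ?thesis using dsum_uniq[OF assms(1) assms(2) _ assms(3), of c' d'] h by simp
  qed
qed

lemma pr1_prop: assumes "internal_dsum R M C D" "m \<in> carrier M"
  shows "pr1 C D m \<in> C" "m \<ominus> pr1 C D m \<in> D" "m = pr1 C D m \<oplus> (m \<ominus> pr1 C D m)"
proof -
  obtain c d where cd: "c \<in> C" "d \<in> D" "m = c \<oplus> d" using dsum_ex[OF assms] by blast
  have p: "pr1 C D m = c" using pr1_eq[OF assms(1) cd(1,2)] cd(3) by simp
  have cC: "c \<in> carrier M" "d \<in> carrier M" using cd assms(1) sub_carrier unfolding internal_dsum_def by auto
  show "pr1 C D m \<in> C" using p cd by simp
  show "m \<ominus> pr1 C D m \<in> D" using p cd ga4 cC by simp
  show "m = pr1 C D m \<oplus> (m \<ominus> pr1 C D m)" using p cd ga4 cC by simp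
qed

lemma pr1_mhom: assumes ds: "internal_dsum R M C D" shows "mhom R M (carrier M) C (pr1 C D)"
proof -
  have C: "submodule C R M" and D: "submodule D R M" using ds unfolding internal_dsum_def by auto
  note cC = sub_carrier[OF C, THEN subsetD] and cD = sub_carrier[OF D, THEN subsetD]
  note P = pr1_prop[OF ds]
  show ?thesis unfolding mhom_def
  proof (intro conjI ballI)
    fix x y assume xy: "x \<in> carrier M" "y \<in> carrier M"
    have m: "pr1 C D x \<in> carrier M" "pr1 C D y \<in> carrier M" "x \<ominus> pr1 C D x \<in> carrier M" "y \<ominus> pr1 C D y \<in> carrier M"
      using P[OF xy(1)] P[OF xy(2)] cC cD by auto
    have "(pr1 C D x \<oplus> pr1 C D y) \<oplus> ((x \<ominus> pr1 C D x) \<oplus> (y \<ominus> pr1 C D y))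
       = (pr1 C D x \<oplus> (x \<ominus> pr1 C D x)) \<oplus> (pr1 C D y \<oplus> (y \<ominus> pr1 C D y))"
      using m by (simp add: a_ac)
    also have "\<dots> = x \<oplus> y" using P(3)[OF xy(1)] P(3)[OF xy(2)] by simp
    finally have "x \<oplus> y = (pr1 C D x \<oplus> pr1 C D y) \<oplus> ((x \<ominus> pr1 C D x) \<oplus> (y \<ominus> pr1 C D y))" by simp
    then show "pr1 C D (x \<oplus> y) = pr1 C D x \<oplus> pr1 C D y"
      using pr1_eq[OF ds] sub_add[OF C] sub_add[OF D] P xy by simp
  next
    fix a x assume ax: "a \<in> carrier R" "x \<in> carrier M"
    have "a \<odot> (pr1 C D x \<oplus> (x \<ominus> pr1 C D x)) = a \<odot> pr1 C D x \<oplus> a \<odot> (x \<ominus> pr1 C D x)"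
      by (rule smult_add[OF ax(1) cC[OF P(1)[OF ax(2)]] cD[OF P(2)[OF ax(2)]]])
    then have "a \<odot> x = a \<odot> pr1 C D x \<oplus> a \<odot> (x \<ominus> pr1 C D x)"
      using P(3)[OF ax(2), symmetric] by simp
    then show "pr1 C D (a \<odot> x) = a \<odot> pr1 C D x"
      using pr1_eq[OF ds] sub_smult[OF C ax(1)] sub_smult[OF D ax(1)] P ax by simp
  qed (use P in auto)
qed

lemma pr1_zero_D: assumes ds: "internal_dsum R M C D" "m \<in> carrier M" "pr1 C D m = \<zero>" shows "m \<in> D"
proof -
  have "m \<ominus> \<zero> = m" using ds(2) by (simp add: minus_eq add.inv_one)
  then show ?thesis using pr1_prop(2)[OF ds(1,2)] ds(3) by simp
qed

lemma dsum_exchange: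
  assumes ds: "internal_dsum R M C D" and E: "submodule E R M"
    and inj: "inj_on (pr1 C D) E" and surj: "pr1 C D ` E = C"
  shows "internal_dsum R M E D"
proof -
  have C: "submodule C R M" and D: "submodule D R M" using ds unfolding internal_dsum_def by auto
  note cC = sub_carrier[OF C, THEN subsetD] and cD = sub_carrier[OF D, THEN subsetD]
    and cE = sub_carrier[OF E, THEN subsetD]
  note P = pr1_mhom[OF ds]
  have pD: "pr1 C D d = \<zero>" if "d \<in> D" for d using pr1_eq[OF ds sub_zero[OF C] that] cD[OF that] by simp
  show ?thesis
  proof (rule dsumI[OF E D])
    fix m assume m: "m \<in> carrier M"
    obtain e where e: "e \<in> E" "pr1 C D e = pr1 C D m" using surj pr1_prop(1)[OF ds m] by (metis imageE)
    have "pr1 C D (m \<ominus> e) = \<zero>"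
      using mhom_minus[OF P carrier_sub C m cE[OF e(1)]] e ga3 cC pr1_prop(1)[OF ds m] by simp
    then have "m \<ominus> e \<in> D" using pr1_zero_D[OF ds] m cE[OF e(1)] by simp
    moreover have "m = e \<oplus> (m \<ominus> e)" using ga1 m cE[OF e(1)] by simp
    ultimately show "\<exists>c\<in>E. \<exists>d\<in>D. m = c \<oplus> d" using e by blast
  next
    fix c c' d d' assume h: "c \<in> E" "c' \<in> E" "d \<in> D" "d' \<in> D" "c \<oplus> d = c' \<oplus> d'"
    have "pr1 C D (c \<oplus> d) = pr1 C D c"
      using mhom_add[OF P, of c d] h(1,3) cE cD pD[OF h(3)] pr1_prop(1)[OF ds, of c] cC by simp
    moreover have "pr1 C D (c' \<oplus> d') = pr1 C D c'"
      using mhom_add[OF P, of c' d'] h(2,4) cE cD pD[OF h(4)] pr1_prop(1)[OF ds, of c'] cC by simp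
    ultimately have "pr1 C D c = pr1 C D c'" using h(5) by simp
    then have "c = c'" using h inj_onD[OF inj] by metis
    moreover have "d = c \<oplus> d \<ominus> c" using ga4[of c d] cE[OF h(1)] cD[OF h(3)] by simp
    moreover have "d' = c' \<oplus> d' \<ominus> c'" using ga4[of c' d'] cE[OF h(2)] cD[OF h(4)] by simp
    ultimately show "c = c' \<and> d = d'" using h(5) by simp
  qed
qed

lemma dsum_sym: assumes ds: "internal_dsum R M C D" shows "internal_dsum R M D C"
proof -
  have C: "submodule C R M" and D: "submodule D R M" using ds unfolding internal_dsum_def by auto
  note cC = sub_carrier[OF C, THEN subsetD] and cD = sub_carrier[OF D, THEN subsetD]
  show ?thesis
  proof (rule dsumI[OF D C])
    fix m assume "m \<in> carrier M"
    then obtain c d where "c \<in> C" "d \<in> D" "m = c \<oplus> d" using dsum_ex[OF ds] by blast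
    then show "\<exists>c\<in>D. \<exists>d\<in>C. m = c \<oplus> d" using a_comm cC cD by blast
  next
    fix c c' d d' assume h: "c \<in> D" "c' \<in> D" "d \<in> C" "d' \<in> C" "c \<oplus> d = c' \<oplus> d'"
    then have "d \<oplus> c = d' \<oplus> c'" using a_comm cC cD by metis
    then show "c = c' \<and> d = d'" using dsum_uniq[OF ds h(3,4,1,2)] by simp
  qed
qed

end

locale flmod = lmod +
  assumes fl: "finite_length R M"
begin

lemma fin_chain: fixes S :: "nat \<Rightarrow> _ set" assumes "\<And>k. submodule (S k) R M" "\<And>i j. i \<le> j \<Longrightarrow> S i \<subseteq> S j \<or> S j \<subseteq> S i"
  shows "finite (range S)"
proof -
  have "range S \<subseteq> {N. submodule N R M}" using assms(1) by auto
  moreover have "\<forall>A\<in>range S. \<forall>B\<in>range S. A \<subseteq> B \<or> B \<subseteq> A"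
  proof (intro ballI)
    fix A B assume "A \<in> range S" "B \<in> range S"
    then obtain i j where ij: "A = S i" "B = S j" by auto
    show "A \<subseteq> B \<or> B \<subseteq> A"
    proof (cases "i \<le> j")
      case True then show ?thesis using assms(2)[of i j] ij by auto
    next
      case False then have "j \<le> i" by simp
      then show ?thesis using assms(2)[of j i] ij by blast
    qed
  qed
  ultimately show ?thesis using fl unfolding finite_length_def by blast
qed

lemma stab_dec: fixes S :: "nat \<Rightarrow> _ set" assumes "\<And>k. submodule (S k) R M" "\<And>k. S (Suc k) \<subseteq> S k"
  shows "\<exists>k. \<forall>j\<ge>k. S j = S k"
proof -
  have "finite (range S)"
  proof (rule fin_chain[of S])
    fix i j :: nat assume "i \<le> j" then show "S i \<subseteq> S j \<or> S j \<subseteq> S i"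
      using lift_Suc_antimono_le[of S, OF assms(2)] by simp
  qed (rule assms(1))
  then show ?thesis using stab_dec_aux[of S] assms(2) by simp
qed

lemma stab_inc: fixes S :: "nat \<Rightarrow> _ set" assumes "\<And>k. submodule (S k) R M" "\<And>k. S k \<subseteq> S (Suc k)"
  shows "\<exists>k. \<forall>j\<ge>k. S j = S k"
proof -
  have "finite (range S)"
  proof (rule fin_chain[of S])
    fix i j :: nat assume "i \<le> j" then show "S i \<subseteq> S j \<or> S j \<subseteq> S i"
      using lift_Suc_mono_le[of S, OF assms(2)] by simp
  qed (rule assms(1))
  then show ?thesis using stab_inc_aux[of S] assms(2) by simp
qed

lemma inj_on_pow: "inj_on h X \<Longrightarrow> h ` X \<subseteq> X \<Longrightarrow> inj_on (h ^^ k) X"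
proof (induction k)
  case 0 then show ?case by simp
next
  case (Suc k)
  have "inj_on (h ^^ k \<circ> h) X" using Suc by (intro comp_inj_on) (auto intro: inj_on_subset)
  then show ?case by (simp add: funpow_Suc_right comp_def del: funpow.simps)
qed

lemma inj_surj: assumes X: "submodule X R M" and h: "mhom R M X X h" and inj: "inj_on h X"
  shows "h ` X = X"
proof -
  define S where "S k = (h ^^ k) ` X" for k
  have hX: "h ` X \<subseteq> X" using mhom_in[OF h] by auto
  have sub: "submodule (S k) R M" for k unfolding S_def by (rule image_sub[OF mhom_funpow[OF h] X X])
  have dec: "S (Suc k) \<subseteq> S k" for k
    unfolding S_def funpow_Suc_right using hX by (auto simp del: funpow.simps)
  obtain k where k: "\<forall>j\<ge>k. S j = S k" using stab_dec[of S] sub dec by blast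
  have "y \<in> h ` X" if y: "y \<in> X" for y
  proof -
    have "(h ^^ k) y \<in> S k" using y unfolding S_def by auto
    then have "(h ^^ k) y \<in> S (Suc k)" using k[rule_format, of "Suc k"] by simp
    then obtain z where z: "z \<in> X" "(h ^^ k) y = (h ^^ k) (h z)"
      unfolding S_def funpow_Suc_right comp_def by (auto simp del: funpow.simps)
    then have "y = h z" using inj_onD[OF inj_on_pow[OF inj hX, of k]] y hX by blast
    then show ?thesis using z by auto
  qed
  then show ?thesis using hX by auto
qed


lemma nilpotent:
  assumes X: "submodule X R M" and Y: "submodule Y R M"
    and cop: "coprime_mod R (submod M X) (submod M Y)"
    and f: "mhom R M X Y f" and g: "mhom R M Y X g"
  shows "\<exists>k. \<forall>x\<in>X. ((\<lambda>x. g (f x)) ^^ k) x = \<zero>"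
proof -
  define n where "n = (\<lambda>x. g (f x))"
  have n: "mhom R M X X n" unfolding n_def by (rule mhom_comp[OF f g])
  have cX: "x \<in> carrier M" if "x \<in> X" for x using that sub_carrier[OF X] by auto
  define I where "I j = (n ^^ j) ` X" for j
  define K where "K j = {x \<in> X. (n ^^ j) x = \<zero>}" for j
  have nX: "n ` X \<subseteq> X" using mhom_in[OF n] by auto
  have Isub: "submodule (I j) R M" for j unfolding I_def by (rule image_sub[OF mhom_funpow[OF n] X X])
  have Ksub: "submodule (K j) R M" for j unfolding K_def by (rule ker_sub[OF mhom_funpow[OF n] X X])
  have Idec: "I (Suc j) \<subseteq> I j" for j
    unfolding I_def funpow_Suc_right using nX by (auto simp del: funpow.simps)
  have Kinc: "K j \<subseteq> K (Suc j)" for j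
    unfolding K_def using mhom_zero[OF n X X] by auto
  obtain k1 where k1: "\<forall>j\<ge>k1. I j = I k1" using stab_dec[of I] Isub Idec by blast
  obtain k2 where k2: "\<forall>j\<ge>k2. K j = K k2" using stab_inc[of K] Ksub Kinc by blast
  define k where "k = max k1 k2"
  have Ik: "I j = I k" if "j \<ge> k" for j using k1 that unfolding k_def by (metis max.cobounded1 order_trans)
  have Kk: "K j = K k" if "j \<ge> k" for j using k2 that unfolding k_def by (metis max.cobounded2 order_trans)
  define X' where "X' = I k"
  have X': "submodule X' R M" unfolding X'_def by (rule Isub)
  have X'X: "X' \<subseteq> X" unfolding X'_def I_def using mhom_in[OF mhom_funpow[OF n]] by auto
  define m where "m = n ^^ Suc k"
  have m: "mhom R M X X m" unfolding m_def by (rule mhom_funpow[OF n])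
  have pow_add: "(n ^^ a) ((n ^^ b) x) = (n ^^ (a + b)) x" for a b x by (simp add: funpow_add)
  have mX: "m ` X = X'" unfolding m_def X'_def using Ik[of "Suc k"] by (simp add: I_def)
  have mX': "m ` X' = X'"
  proof -
    have "m ` X' = (n ^^ (Suc k + k)) ` X" unfolding m_def X'_def I_def image_comp comp_def pow_add ..
    also have "\<dots> = X'" using Ik[of "Suc k + k"] unfolding X'_def I_def by simp
    finally show ?thesis .
  qed
  have nkX: "(n ^^ k) ` X = X'" unfolding X'_def I_def ..
  have minj: "inj_on m X'"
  proof (rule inj_onI)
    fix x1 x2 assume x: "x1 \<in> X'" "x2 \<in> X'" "m x1 = m x2"
    have d: "x1 \<ominus> x2 \<in> X'" using sub_minus[OF X' x(1,2)] .
    have x1X: "x1 \<in> X" "x2 \<in> X" using x X'X by auto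
    have "m (x1 \<ominus> x2) = m x1 \<ominus> m x2" using mhom_minus[OF m X X x1X] .
    also have "\<dots> = \<zero>" using x(3) ga3 cX mhom_in[OF m x1X(2)] by simp
    finally have "m (x1 \<ominus> x2) = \<zero>" .
    moreover obtain y where y: "y \<in> X" "x1 \<ominus> x2 = (n ^^ k) y" using d nkX by auto
    ultimately have "(n ^^ (Suc k + k)) y = \<zero>" unfolding m_def by (simp add: pow_add)
    then have "y \<in> K (Suc k + k)" using y unfolding K_def by auto
    then have "y \<in> K k" using Kk[of "Suc k + k"] by simp
    then have "x1 \<ominus> x2 = \<zero>" using y unfolding K_def by simp
    then show "x1 = x2" using ga5 cX x X'X by auto
  qed
  have bij: "bij_betw m X' X'" using minj mX' by (simp add: bij_betw_def)
  have mX'X': "mhom R M X' X' m" using mhom_mono[OF m X'X, of X] mX' unfolding mhom_def by auto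
  define u where "u = the_inv_into X' m"
  have u: "mhom R M X' X' u" unfolding u_def by (rule mhom_inv[OF mX'X' bij X' X'])
  have um: "u (m x) = x" if "x \<in> X'" for x unfolding u_def using the_inv_into_f_f[OF minj that] .
  have mXX': "mhom R M X X' m" using m mX unfolding mhom_def by auto
  have nkXX': "mhom R M X X' (n ^^ k)" using mhom_funpow[OF n, of k] nkX unfolding mhom_def by auto
  have div1: "divisor R (submod M X') (submod M X)"
  proof (rule split_divisor[OF X' X])
    show "mhom R M X' X (\<lambda>x. x)" using mhom_mono[OF mhom_id[of X'] order_refl X'X] .
    show "mhom R M X X' (\<lambda>x. u (m x))" by (rule mhom_comp[OF mXX' u])
  qed (use um in auto)
  have div2: "divisor R (submod M X') (submod M Y)"
  proof (rule split_divisor[OF X' Y])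
    show "mhom R M X' Y f" using mhom_mono[OF f X'X order_refl] .
    show "mhom R M Y X' (\<lambda>y. u ((n ^^ k) (g y)))"
      by (rule mhom_comp[OF mhom_comp[OF g nkXX'] u])
    fix x assume x: "x \<in> X'"
    have "(n ^^ k) (g (f x)) = m x" unfolding m_def funpow_Suc_right n_def by simp
    then show "u ((n ^^ k) (g (f x))) = x" using um[OF x] by simp
  qed
  have "carrier (submod M X') = {\<zero>\<^bsub>submod M X'\<^esub>}"
    using cop div1 div2 sub_lmodule[OF X'] unfolding coprime_mod_def by blast
  then have X'0: "X' = {\<zero>}" unfolding submod_def by simp
  have "\<forall>x\<in>X. (n ^^ k) x = \<zero>" using nkX X'0 by auto
  then show ?thesis unfolding n_def by blast
qed


lemma fix_pow: "x = n x \<Longrightarrow> (n ^^ j) x = x"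
  by (induction j) auto

lemma main:
  assumes cop: "coprime_mod R (submod M A1) (submod M A2)"
    and dsA: "internal_dsum R M A1 A2" and dsB: "internal_dsum R M B1 B2"
    and iso: "mod_isomorphic R (submod M A1) (submod M B1)"
  shows "internal_dsum R M A1 B2 \<and> internal_dsum R M B1 A2"
proof -
  have A1: "submodule A1 R M" and A2: "submodule A2 R M" using dsA unfolding internal_dsum_def by auto
  have B1: "submodule B1 R M" and B2: "submodule B2 R M" using dsB unfolding internal_dsum_def by auto
  note cA1 = sub_carrier[OF A1, THEN subsetD] and cA2 = sub_carrier[OF A2, THEN subsetD]
  note cB1 = sub_carrier[OF B1, THEN subsetD] and cB2 = sub_carrier[OF B2, THEN subsetD]
  obtain \<phi> where \<phi>: "mod_iso R (submod M A1) (submod M B1) \<phi>" using iso unfolding mod_isomorphic_def by blast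
  have bij\<phi>: "bij_betw \<phi> A1 B1" using \<phi> unfolding mod_iso_def submod_def by simp
  have phi: "mhom R M A1 B1 \<phi>" using \<phi> bij_betw_apply[OF bij\<phi>] unfolding mod_iso_def submod_def mhom_def by simp
  define \<psi> where "\<psi> = the_inv_into A1 \<phi>"
  have psi: "mhom R M B1 A1 \<psi>" unfolding \<psi>_def by (rule mhom_inv[OF phi bij\<phi> A1 B1])
  have bij\<psi>: "bij_betw \<psi> B1 A1" unfolding \<psi>_def by (rule bij_betw_the_inv_into[OF bij\<phi>])
  have \<psi>\<phi>: "\<psi> (\<phi> x) = x" if "x \<in> A1" for x
    unfolding \<psi>_def using the_inv_into_f_f[OF bij_betw_imp_inj_on[OF bij\<phi>] that] .
  define pA where "pA = pr1 A1 A2"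
  define qA where "qA = pr1 A2 A1"
  define pB where "pB = pr1 B1 B2"
  have PA: "mhom R M (carrier M) A1 pA" unfolding pA_def by (rule pr1_mhom[OF dsA])
  have QA: "mhom R M (carrier M) A2 qA" unfolding qA_def by (rule pr1_mhom[OF dsum_sym[OF dsA]])
  have PB: "mhom R M (carrier M) B1 pB" unfolding pB_def by (rule pr1_mhom[OF dsB])
  have decA: "m = pA m \<oplus> qA m" if m: "m \<in> carrier M" for m
  proof -
    note P = pr1_prop[OF dsA m]
    have "qA m = qA ((m \<ominus> pA m) \<oplus> pA m)" using P cA1 cA2 a_comm unfolding pA_def by metis
    also have "\<dots> = m \<ominus> pA m" unfolding qA_def using pr1_eq[OF dsum_sym[OF dsA]] P unfolding pA_def by simp
    finally show ?thesis using P unfolding pA_def by simp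
  qed
  have pB1: "pB b = b" if "b \<in> B1" for b
    using pr1_eq[OF dsB that sub_zero[OF B2]] cB1[OF that] unfolding pB_def by simp
  have phiC: "mhom R M A1 (carrier M) \<phi>" using mhom_mono[OF phi order_refl sub_carrier[OF B1]] .
  define \<alpha> where "\<alpha> x = pA (\<phi> x)" for x
  define \<beta> where "\<beta> x = \<psi> (pB x)" for x
  define f where "f x = qA (\<phi> x)" for x
  define g where "g y = \<psi> (pB y)" for y
  have alpha: "mhom R M A1 A1 \<alpha>" unfolding \<alpha>_def by (rule mhom_comp[OF phiC PA])
  have beta: "mhom R M A1 A1 \<beta>" unfolding \<beta>_def
    by (rule mhom_comp[OF mhom_mono[OF PB sub_carrier[OF A1] order_refl] psi])
  have fm: "mhom R M A1 A2 f" unfolding f_def by (rule mhom_comp[OF phiC QA])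
  have gm: "mhom R M A2 A1 g" unfolding g_def
    by (rule mhom_comp[OF mhom_mono[OF PB sub_carrier[OF A2] order_refl] psi])
  have key: "\<beta> (\<alpha> x) \<oplus> g (f x) = x" if x: "x \<in> A1" for x
  proof -
    have px: "\<phi> x \<in> B1" using mhom_in[OF phi x] .
    have 1: "pA (\<phi> x) \<in> carrier M" "qA (\<phi> x) \<in> carrier M"
      using mhom_in[OF PA] mhom_in[OF QA] cB1[OF px] cA1 cA2 by auto
    have "pB (\<phi> x) = pB (pA (\<phi> x)) \<oplus> pB (qA (\<phi> x))"
      using decA[OF cB1[OF px]] mhom_add[OF PB 1] by simp
    then have "\<phi> x = pB (pA (\<phi> x)) \<oplus> pB (qA (\<phi> x))" using pB1[OF px] by simp
    then have "\<psi> (\<phi> x) = \<psi> (pB (pA (\<phi> x))) \<oplus> \<psi> (pB (qA (\<phi> x)))"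
      using mhom_add[OF psi mhom_in[OF PB 1(1)] mhom_in[OF PB 1(2)]] by simp
    then show ?thesis using \<psi>\<phi>[OF x] unfolding \<alpha>_def \<beta>_def f_def g_def by simp
  qed
  obtain k where k: "\<forall>x\<in>A1. ((\<lambda>x. g (f x)) ^^ k) x = \<zero>" using nilpotent[OF A1 A2 cop fm gm] by blast
  define BA where "BA x = \<beta> (\<alpha> x)" for x
  have ba: "mhom R M A1 A1 BA" unfolding BA_def by (rule mhom_comp[OF alpha beta])
  have injBA: "inj_on BA A1"
  proof (rule inj_onI)
    fix x1 x2 assume h: "x1 \<in> A1" "x2 \<in> A1" "BA x1 = BA x2"
    define d where "d = x1 \<ominus> x2"
    have d: "d \<in> A1" unfolding d_def using sub_minus[OF A1 h(1,2)] .
    have "BA d = BA x1 \<ominus> BA x2" unfolding d_def using mhom_minus[OF ba A1 A1 h(1,2)] .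
    then have "BA d = \<zero>" using h(3) ga3 cA1 mhom_in[OF ba h(2)] by simp
    then have "\<zero> \<oplus> g (f d) = d" using key[OF d] unfolding BA_def by simp
    then have "d = g (f d)" using cA1 mhom_in[OF gm mhom_in[OF fm d]] by simp
    then have "((\<lambda>x. g (f x)) ^^ k) d = d" by (rule fix_pow)
    then have "d = \<zero>" using k d by simp
    then show "x1 = x2" using ga5 cA1 h(1,2) unfolding d_def by simp
  qed
  have surjBA: "BA ` A1 = A1" by (rule inj_surj[OF A1 ba injBA])
  have injA: "inj_on \<alpha> A1"
  proof (rule inj_onI)
    fix x1 x2 assume "x1 \<in> A1" "x2 \<in> A1" "\<alpha> x1 = \<alpha> x2"
    then show "x1 = x2" using inj_onD[OF injBA] unfolding BA_def by metis
  qed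
  have surjA: "\<alpha> ` A1 = A1" by (rule inj_surj[OF A1 alpha injA])
  have c1: "inj_on pB A1"
  proof (rule inj_onI)
    fix x1 x2 assume h: "x1 \<in> A1" "x2 \<in> A1" "pB x1 = pB x2"
    obtain z1 where z1: "z1 \<in> A1" "x1 = \<alpha> z1" using h(1) surjA by auto
    obtain z2 where z2: "z2 \<in> A1" "x2 = \<alpha> z2" using h(2) surjA by auto
    have "BA z1 = BA z2" using h(3) z1 z2 unfolding BA_def \<beta>_def by simp
    then show "x1 = x2" using inj_onD[OF injBA _ z1(1) z2(1)] z1 z2 by simp
  qed
  have c2: "pB ` A1 = B1"
  proof
    show "pB ` A1 \<subseteq> B1" using mhom_in[OF PB] cA1 by auto
    show "B1 \<subseteq> pB ` A1"
    proof
      fix b assume b: "b \<in> B1"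
      have "\<psi> b \<in> A1" using mhom_in[OF psi b] .
      then obtain z where z: "z \<in> A1" "\<psi> b = BA z" using surjBA by (metis imageE)
      have az: "\<alpha> z \<in> A1" using mhom_in[OF alpha z(1)] .
      have "\<psi> b = \<psi> (pB (\<alpha> z))" using z unfolding BA_def \<beta>_def by simp
      then have "b = pB (\<alpha> z)"
        using inj_onD[OF bij_betw_imp_inj_on[OF bij\<psi>] _ b mhom_in[OF PB cA1[OF az]]] by simp
      then show "b \<in> pB ` A1" using az by auto
    qed
  qed
  have d1: "inj_on pA B1"
  proof (rule inj_onI)
    fix b1 b2 assume h: "b1 \<in> B1" "b2 \<in> B1" "pA b1 = pA b2"
    obtain x1 where x1: "x1 \<in> A1" "b1 = \<phi> x1" using h(1) bij\<phi> by (auto simp: bij_betw_def)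
    obtain x2 where x2: "x2 \<in> A1" "b2 = \<phi> x2" using h(2) bij\<phi> by (auto simp: bij_betw_def)
    have "\<alpha> x1 = \<alpha> x2" using h(3) x1 x2 unfolding \<alpha>_def by simp
    then show "b1 = b2" using inj_onD[OF injA _ x1(1) x2(1)] x1 x2 by simp
  qed
  have d2: "pA ` B1 = A1"
  proof
    show "pA ` B1 \<subseteq> A1" using mhom_in[OF PA] cB1 by auto
    show "A1 \<subseteq> pA ` B1"
    proof
      fix a assume "a \<in> A1"
      then obtain z where z: "z \<in> A1" "a = \<alpha> z" using surjA by auto
      then show "a \<in> pA ` B1" using mhom_in[OF phi z(1)] unfolding \<alpha>_def by auto
    qed
  qed
  show ?thesis
    using dsum_exchange[OF dsB A1 c1[unfolded pB_def] c2[unfolded pB_def]]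
      dsum_exchange[OF dsA B1 d1[unfolded pA_def] d2[unfolded pA_def]] by simp
qed

end

theorem proposition2p9:
  fixes R :: "('r, 'z) ring_scheme" and M :: "('r, 'a) module"
    and A1 A2 B1 B2 :: "'a set"
  assumes "lmodule R M"
    and "finite_length R M"
    and "submodule A1 R M" and "submodule A2 R M"
    and "submodule B1 R M" and "submodule B2 R M"
    and "coprime_mod R (submod M A1) (submod M A2)"
    and "internal_dsum R M A1 A2"
    and "internal_dsum R M B1 B2"
    and "mod_isomorphic R (submod M A1) (submod M B1)"
  shows "internal_dsum R M A1 B2 \<and> internal_dsum R M B1 A2"
proof -
  interpret flmod R M by (rule flmod.intro[OF lmod.intro[OF assms(1)]]) (unfold_locales, rule assms(2))
  show ?thesis by (rule main[OF assms(7-10)])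
qed

end
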